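(* Let $T$ be the rotation of angle $\alpha$ on $\mathbb T=\mathbb R/\mathbb Z$ (with uniform measure $Leb_{\mathbb T}$), let $\lambda\in(0,1)$ be such that $1/\lambda$ is a Pisot number, and let $b:\mathbb T\to\mathbb Z$ be constant on each interval of a partition $\mathbb T=\bigsqcup_{0\le i<N}[d_i,d_{i+1})$ (with $d_N=d_0$). Let $X(x)=\sum_{k\ge0}\lambda^k b(T^kx)$ and let $P_X$ be the image of $Leb_{\mathbb T}$ under $X$. Then $P_X$ is not a Rajchman measure.
   Context: A Pisot number is a real algebraic integer $\rho>1$ all of whose Galois conjugates other than $\rho$ have modulus $<1$. The Fourier transform of $P_X$ is $\hat P_X(t)=\int_{\mathbb R}e^{2i\pi tx}\,dP_X(x)$, and $P_X$ is a Rajchman measure if $\hat P_X(t)\to0$ as $t\to+\infty$. *)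

theory Defs
  imports "HOL-Analysis.Analysis" "HOL-Computational_Algebra.Polynomial_Factorial"
begin

definition pisot :: "real \<Rightarrow> bool" where
  "pisot \<rho> \<longleftrightarrow> \<rho> > 1 \<and> algebraic_int \<rho> \<and>
     (\<exists>p :: int poly. irreducible p \<and> poly (map_poly of_int p) (complex_of_real \<rho>) = 0 \<and>
        (\<forall>z::complex. poly (map_poly of_int p) z = 0 \<and> z \<noteq> complex_of_real \<rho> \<longrightarrow> cmod z < 1))"

text \<open>Uniform (Lebesgue) probability measure on the circle R/Z, realised on [0,1).\<close>
definition leb_T :: "real measure" where
  "leb_T = restrict_space lborel {0..<1}"

definition fourier_transform :: "real measure \<Rightarrow> real \<Rightarrow> complex" where
  "fourier_transform P t = (CLINT x|P. exp (2 * \<i> * complex_of_real (pi * t * x)))"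

definition rajchman :: "real measure \<Rightarrow> bool" where
  "rajchman P \<longleftrightarrow> ((fourier_transform P) \<longlongrightarrow> 0) at_top"

end

theory Submission
  imports Defs "HOL-Computational_Algebra.Formal_Power_Series" "HOL-Computational_Algebra.Fundamental_Theorem_Algebra"
begin

lemma map_poly_of_int_mult:
  "map_poly (of_int :: int \<Rightarrow> 'a::comm_ring_1) (p * q) = map_poly of_int p * map_poly of_int q"
  by (rule poly_eqI) (simp add: coeff_map_poly coeff_mult)

lemma map_poly_of_int_add:
  "map_poly (of_int :: int \<Rightarrow> 'a::comm_ring_1) (p + q) = map_poly of_int p + map_poly of_int q"
  by (rule poly_eqI) (simp add: coeff_map_poly)

lemma map_poly_of_int_smult:
  "map_poly (of_int :: int \<Rightarrow> 'a::comm_ring_1) (smult c q) = smult (of_int c) (map_poly of_int q)"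
  by (rule poly_eqI) (simp add: coeff_map_poly)

lemma ipoly_const_root:
  fixes x :: "'a::field_char_0"
  assumes "g \<noteq> 0" "degree g = 0" "poly (map_poly of_int g) x = 0"
  shows False
proof -
  from assms(2) have "g = [:coeff g 0:]" by (metis degree_0_id) 
  then have "map_poly (of_int :: int \<Rightarrow> 'a) g = [:of_int (coeff g 0):]"
    by (metis map_poly_pCons of_int_0 map_poly_0)
  with assms(3) have "coeff g 0 = 0" by simp
  with \<open>g = _\<close> assms(1) show False by simp
qed

lemma irreducible_lead_unit:
  fixes x :: "'a::field_char_0"
  assumes irr: "irreducible (p :: int poly)" and px: "poly (map_poly of_int p) x = 0"
    and qx: "poly (map_poly of_int q) x = 0" and lq: "lead_coeff q = 1"
  shows "lead_coeff p = 1 \<or> lead_coeff p = -1"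
proof -
  define Z where "Z h \<longleftrightarrow> h \<noteq> 0 \<and> poly (map_poly of_int h) x = 0" for h :: "int poly"
  have p0: "p \<noteq> 0" using irr by auto
  have "Z p" using p0 px by (simp add: Z_def)
  then obtain g where Zg: "Z g" and gmin: "\<And>h. Z h \<Longrightarrow> degree g \<le> degree h"
    using ex_has_least_nat[of Z p degree] by blast
  have g0: "g \<noteq> 0" using Zg by (simp add: Z_def)
  have key: "\<exists>c. c \<noteq> 0 \<and> g dvd smult c h" if hx: "poly (map_poly of_int h) x = 0" for h
  proof -
    obtain s r where sr: "pseudo_divmod h g = (s, r)" by (metis surj_pair)
    define c where "c = coeff g (degree g) ^ (Suc (degree h) - degree g)"
    have eq: "smult c h = g * s + r" and rr: "r = 0 \<or> degree r < degree g"
      using pseudo_divmod[OF g0 sr] by (simp_all add: c_def)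
    have c0: "c \<noteq> 0" using g0 by (simp add: c_def)
    have "poly (map_poly (of_int :: int \<Rightarrow> 'a) (smult c h)) x = 0"
      by (simp add: map_poly_of_int_smult hx)
    also have "map_poly (of_int :: int \<Rightarrow> 'a) (smult c h) = map_poly of_int g * map_poly of_int s + map_poly of_int r"
      by (simp add: eq map_poly_of_int_add map_poly_of_int_mult)
    finally have rx: "poly (map_poly (of_int :: int \<Rightarrow> 'a) r) x = 0"
      using Zg by (simp add: Z_def)
    then have "r = 0"
    proof (rule contrapos_pp)
      assume "r \<noteq> 0"
      with rx have "Z r" by (simp add: Z_def)
      with rr gmin[of r] \<open>r \<noteq> 0\<close> show "poly (map_poly of_int r) x \<noteq> 0" by auto
    qed
    then show ?thesis using eq c0 by auto
  qed
  have pr: "prime_elem p" by (rule irreducible_imp_prime_poly[OF irr])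
  obtain c where c0: "c \<noteq> 0" and gd: "g dvd smult c p" using key[OF px] by blast
  then obtain s where gs: "smult c p = g * s" by (auto elim: dvdE)
  have "p dvd g * s" unfolding gs[symmetric] by (rule dvd_smult) simp
  then have "p dvd g \<or> p dvd s" using pr by (simp add: prime_elem_dvd_mult_iff)
  moreover have "\<not> p dvd s"
  proof
    assume "p dvd s"
    then obtain t where "s = p * t" by (auto elim: dvdE)
    with gs have "[:c:] * p = (g * t) * p" by (simp add: ac_simps)
    then have "[:c:] = g * t" using p0 by (metis mult_cancel_right)
    then have "degree g = 0"
      by (metis c0 degree_mult_eq degree_pCons_0 add_is_0 mult_zero_right pCons_eq_0_iff)
    with Zg show False using ipoly_const_root[of g x] by (simp add: Z_def)
  qed
  ultimately have pg: "p dvd g" by blast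
  obtain c' where c'0: "c' \<noteq> 0" and gq: "g dvd smult c' q" using key[OF qx] by blast
  have "p dvd [:c':] * q" using dvd_trans[OF pg gq] by simp
  then have "p dvd [:c':] \<or> p dvd q" using pr by (metis prime_elem_dvd_mult_iff)
  moreover have "\<not> p dvd [:c':]"
  proof
    assume "p dvd [:c':]"
    then have "degree p = 0" using c'0 by (metis degree_pCons_0 dvd_imp_degree_le le_zero_eq pCons_eq_0_iff)
    with \<open>Z p\<close> show False using ipoly_const_root[of p x] by (simp add: Z_def)
  qed
  ultimately have "p dvd q" by blast
  then obtain t where "q = p * t" by (auto elim: dvdE)
  then have "lead_coeff p * lead_coeff t = 1" using lq by (simp add: lead_coeff_mult)
  then have "is_unit (lead_coeff p)" by (metis dvd_triv_left)
  then show ?thesis by (auto simp: zdvd1_eq abs_if split: if_splits)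
qed

lemma newton_fps:
  fixes root :: "nat \<Rightarrow> complex"
  shows "fps_of_poly (\<Prod>i<d. [:1, - root i:]) * Abs_fps (\<lambda>j. \<Sum>i<d. root i ^ Suc j)
       = - fps_deriv (fps_of_poly (\<Prod>i<d. [:1, - root i:]))"
proof (induction d)
  case 0
  then show ?case by (simp add: fps_zero_def[symmetric])
next
  case (Suc d)
  define P where "P = fps_of_poly (\<Prod>i<d. [:1, - root i:])"
  define z where "z = root d"
  define W where "W = (1 + fps_const (-z) * fps_X :: complex fps)"
  define S where "S = Abs_fps (\<lambda>j. \<Sum>i<d. root i ^ Suc j)"
  define T where "T = Abs_fps (\<lambda>j. z ^ Suc j)"
  have IH: "P * S = - fps_deriv P" using Suc by (simp add: P_def S_def)
  have WT: "W * T = fps_const z"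
  proof (rule fps_ext)
    fix n
    show "fps_nth (W * T) n = fps_nth (fps_const z) n"
      by (cases n) (simp_all add: W_def T_def algebra_simps fps_X_mult_nth)
  qed
  have dW: "fps_deriv W = fps_const (-z)" by (simp add: W_def)
  have e1: "fps_of_poly (\<Prod>i<Suc d. [:1, - root i:]) = P * W"
    by (simp add: P_def W_def z_def fps_of_poly_linear' fps_of_poly_mult)
  have e2: "Abs_fps (\<lambda>j. \<Sum>i<Suc d. root i ^ Suc j) = S + T"
    by (rule fps_ext) (simp add: S_def T_def z_def)
  have "P * W * (S + T) = W * (P * S) + P * (W * T)" by (simp add: algebra_simps)
  also have "\<dots> = W * (- fps_deriv P) + P * fps_const z" by (simp only: IH WT)
  also have "\<dots> = - (fps_deriv P * W + P * fps_deriv W)"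
    unfolding dW by (simp add: fps_const_neg[symmetric] algebra_simps del: fps_const_neg)
  also have "\<dots> = - fps_deriv (P * W)" by simp
  finally have "P * W * (S + T) = - fps_deriv (P * W)" .
  then show ?case by (simp only: e1 e2)
qed

lemma newton_int:
  fixes root :: "nat \<Rightarrow> complex"
  assumes ints: "\<And>i. coeff (\<Prod>i<d. [:1, - root i:]) i \<in> \<int>"
  shows "(\<Sum>i<d. root i ^ Suc j) \<in> \<int>"
proof -
  define Q where "Q = (\<Prod>i<d. [:1, - root i:])"
  define s where "s j = (\<Sum>i<d. root i ^ Suc j)" for j
  have Q0: "coeff Q 0 = 1"
    by (simp add: Q_def poly_0_coeff_0[symmetric] poly_prod)
  have rel: "(\<Sum>l\<le>j. coeff Q l * s (j - l)) = - (of_nat (Suc j) * coeff Q (Suc j))" for j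
  proof -
    have "fps_nth (fps_of_poly Q * Abs_fps s) j = fps_nth (- fps_deriv (fps_of_poly Q)) j"
      using newton_fps[of root d] by (simp add: Q_def s_def[abs_def])
    then show ?thesis by (simp add: fps_mult_nth atLeast0AtMost)
  qed
  have "s j \<in> \<int>"
  proof (induction j rule: less_induct)
    case (less j)
    have "(\<Sum>l\<le>j. coeff Q l * s (j - l)) = coeff Q 0 * s j + (\<Sum>l\<in>{1..j}. coeff Q l * s (j - l))"
      by (simp add: atMost_atLeast0 sum.atLeast_Suc_atMost)
    then have "s j = - (of_nat (Suc j) * coeff Q (Suc j)) - (\<Sum>l\<in>{1..j}. coeff Q l * s (j - l))"
      using rel[of j] Q0 by simp
    also have "\<dots> \<in> \<int>"
      using less ints by (intro Ints_diff Ints_minus Ints_mult Ints_sum) (auto simp: Q_def)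
    finally show ?case .
  qed
  then show ?thesis by (simp add: s_def)
qed

lemma reflect_linear: "reflect_poly [:- z, 1:] = [:1, - (z::complex):]"
  by (simp add: reflect_poly_def)

lemma pisot_approx:
  fixes \<theta> :: real
  assumes "pisot \<theta>"
  obtains \<mu> :: nat and a :: "nat \<Rightarrow> int" and D r :: real where "\<mu> \<ge> 1" "0 < r" "r < 1" "D \<ge> 0"
    "\<And>j. j \<ge> 1 \<Longrightarrow> \<bar>real \<mu> * \<theta> ^ j - real_of_int (a j)\<bar> \<le> D * r ^ j"
proof -
  define \<theta>c where "\<theta>c = complex_of_real \<theta>"
  from assms obtain p where irr: "irreducible p" and p\<theta>: "poly (map_poly of_int p) \<theta>c = 0"
    and oth: "\<And>z. poly (map_poly of_int p) z = 0 \<Longrightarrow> z \<noteq> \<theta>c \<Longrightarrow> cmod z < 1"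
    and ai: "algebraic_int \<theta>"
    unfolding pisot_def \<theta>c_def by blast
  obtain q where q\<theta>: "poly (map_poly of_int q) \<theta> = 0" and lq: "lead_coeff q = 1"
    using ai algebraic_int_altdef_ipoly by blast
  have "poly (map_poly of_int q) \<theta>c = of_real (poly (map_poly of_int q) \<theta>)"
    by (simp add: \<theta>c_def poly_altdef degree_map_poly coeff_map_poly)
  with q\<theta> have q\<theta>c: "poly (map_poly of_int q) \<theta>c = 0" by simp
  have lp: "lead_coeff p = 1 \<or> lead_coeff p = -1"
    by (rule irreducible_lead_unit[OF irr p\<theta> q\<theta>c lq])
  define pC where "pC = (map_poly of_int p :: complex poly)"
  define lc where "lc = (of_int (lead_coeff p) :: complex)"
  have lc2: "lc * lc = 1" using lp by (auto simp: lc_def)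
  have dpC': "degree (map_poly (of_int::int\<Rightarrow>complex) p) = degree p" by (simp add: degree_map_poly)
  then have dpC: "degree pC = degree p" by (simp add: pC_def)
  have lpC: "lead_coeff pC = lc" by (simp add: pC_def lc_def dpC' coeff_map_poly)
  obtain root where dec: "smult (lead_coeff pC) (\<Prod>i<degree pC. [:-root i, 1:]) = pC"
    using complex_poly_decompose' by blast
  define d where "d = degree pC"
  define Q where "Q = (\<Prod>i<d. [:1, - root i:])"
  have dec': "pC = smult lc (\<Prod>i<d. [:-root i, 1:])" using dec by (simp add: lpC d_def)
  have "reflect_poly pC = smult lc Q"
    by (subst dec') (simp add: reflect_poly_smult reflect_poly_prod reflect_linear Q_def)
  then have Qeq: "Q = smult lc (reflect_poly pC)" using lc2 by (simp add: mult.assoc[symmetric])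
  have Qint: "coeff Q i \<in> \<int>" for i
    by (auto simp: Qeq coeff_reflect_poly lc_def pC_def coeff_map_poly)
  have sint: "(\<Sum>i<d. root i ^ Suc j) \<in> \<int>" for j
    using newton_int[of root d j] Qint by (simp add: Q_def)
  have lc0: "lc \<noteq> 0" using lc2 by auto
  have polyeq: "poly pC z = lc * (\<Prod>i<d. z - root i)" for z
    by (subst dec') (simp add: poly_prod)
  have rootsz: "poly pC (root i) = 0" if "i < d" for i
    unfolding polyeq using that by (auto simp: prod_zero_iff)
  define I1 where "I1 = {i\<in>{..<d}. root i = \<theta>c}"
  define I2 where "I2 = {i\<in>{..<d}. root i \<noteq> \<theta>c}"
  have "poly pC \<theta>c = 0" using p\<theta> by (simp add: pC_def)
  then obtain i0 where "i0 < d" "root i0 = \<theta>c" unfolding polyeq using lc0 by (auto simp: prod_zero_iff)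
  then have "I1 \<noteq> {}" by (auto simp: I1_def)
  moreover have "finite I1" by (simp add: I1_def)
  ultimately have \<mu>1: "card I1 \<ge> 1" by (metis One_nat_def Suc_leI card_gt_0_iff)
  define r where "r = Max (insert (1/2) ((\<lambda>i. cmod (root i)) ` I2))"
  have fin2: "finite I2" by (simp add: I2_def)
  have r_ge: "cmod (root i) \<le> r" if "i \<in> I2" for i
    unfolding r_def using that fin2 by (intro Max_ge) auto
  have r_pos: "0 < r" unfolding r_def using fin2 by (intro order.strict_trans2[OF _ Max_ge[where x="1/2"]]) auto
  have r_lt: "r < 1" unfolding r_def using fin2
    by (subst Max_less_iff) (auto simp: I2_def intro!: oth rootsz[unfolded pC_def])
  define a where "a j = \<lfloor>Re (\<Sum>i<d. root i ^ j)\<rfloor>" for j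
  have main: "\<bar>real (card I1) * \<theta> ^ j - real_of_int (a j)\<bar> \<le> real d * r ^ j" if "j \<ge> 1" for j
  proof -
    define j' where "j' = j - 1"
    have j': "j = Suc j'" using that by (simp add: j'_def)
    from sint[of j'] obtain k where k: "(\<Sum>i<d. root i ^ j) = of_int k" unfolding j' by (auto elim: Ints_cases)
    have ak: "a j = k" by (simp add: a_def k)
    have split: "(\<Sum>i<d. root i ^ j) = (\<Sum>i\<in>I1. root i ^ j) + (\<Sum>i\<in>I2. root i ^ j)"
    proof -
      have U: "{..<d} = I1 \<union> I2" by (auto simp: I1_def I2_def)
      have "(\<Sum>i<d. root i ^ j) = (\<Sum>i\<in>I1 \<union> I2. root i ^ j)" by (simp only: U)
      also have "\<dots> = (\<Sum>i\<in>I1. root i ^ j) + (\<Sum>i\<in>I2. root i ^ j)"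
        by (rule sum.union_disjoint) (auto simp: I1_def I2_def)
      finally show ?thesis .
    qed
    have s1: "(\<Sum>i\<in>I1. root i ^ j) = of_nat (card I1) * \<theta>c ^ j"
      by (simp add: I1_def)
    have "complex_of_real (real (card I1) * \<theta> ^ j - real_of_int (a j)) = - (\<Sum>i\<in>I2. root i ^ j)"
      using split s1 k by (simp add: ak \<theta>c_def)
    then have "\<bar>real (card I1) * \<theta> ^ j - real_of_int (a j)\<bar> = cmod (\<Sum>i\<in>I2. root i ^ j)"
      by (metis norm_minus_cancel norm_of_real)
    also have "\<dots> \<le> (\<Sum>i\<in>I2. cmod (root i) ^ j)"
      by (rule order.trans[OF norm_sum]) (simp add: norm_power)
    also have "\<dots> \<le> (\<Sum>i\<in>I2. r ^ j)"
      by (intro sum_mono power_mono r_ge) auto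
    also have "\<dots> = real (card I2) * r ^ j" by simp
    also have "\<dots> \<le> real d * r ^ j"
    proof -
      have "I2 \<subseteq> {..<d}" by (auto simp: I2_def)
      then have "card I2 \<le> d" using card_mono[of "{..<d}" I2] by simp
      then show ?thesis using r_pos by (intro mult_right_mono) auto
    qed
    finally show ?thesis .
  qed
  show ?thesis
    by (rule that[OF \<mu>1 r_pos r_lt _ main]) auto
qed

locale stepfun =
  fixes b :: "real \<Rightarrow> int" and N :: nat and d :: "nat \<Rightarrow> real"
  assumes b_periodic: "\<And>x. b (x + 1) = b x" and N_pos: "N \<ge> 1"
    and d_mono: "\<And>i j. i < j \<Longrightarrow> j \<le> N \<Longrightarrow> d i < d j" and d_wrap: "d N = d 0 + 1"
    and b_step: "\<And>i x. i < N \<Longrightarrow> d i \<le> x \<Longrightarrow> x < d (Suc i) \<Longrightarrow> b x = b (d i)"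
begin

lemma b_nat: "b (x + real k) = b x"
proof (induction k arbitrary: x)
  case 0 then show ?case by simp
next
  case (Suc k)
  have "b (x + real (Suc k)) = b ((x + real k) + 1)" by (simp add: algebra_simps)
  also have "\<dots> = b x" using b_periodic Suc by simp
  finally show ?case .
qed

lemma b_int: "b (x + real_of_int z) = b x"
proof (cases "z \<ge> 0")
  case True
  then obtain k where "z = int k" by (metis nonneg_eq_int)
  then show ?thesis using b_nat by simp
next
  case False
  then obtain k where k: "z = - int k" by (metis le_cases neg_0_le_iff_le nonneg_eq_int minus_minus)
  have "b x = b ((x - real k) + real k)" by simp
  also have "\<dots> = b (x - real k)" by (rule b_nat)
  finally show ?thesis using k by simp
qed

lemma d_le: "i \<le> j \<Longrightarrow> j \<le> N \<Longrightarrow> d i \<le> d j"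
  using d_mono by (cases "i = j") (auto simp: order.order_iff_strict)

lemma idx:
  assumes "d 0 \<le> y" "y < d N"
  shows "\<exists>i<N. d i \<le> y \<and> y < d (Suc i)"
proof -
  define S where "S = {i. i \<le> N \<and> d i \<le> y}"
  have finS: "finite S" by (simp add: S_def)
  have "0 \<in> S" using assms by (simp add: S_def)
  define i where "i = Max S"
  have iS: "i \<in> S" unfolding i_def using finS \<open>0 \<in> S\<close> by (intro Max_in) auto
  have "i \<noteq> N" using iS assms by (auto simp: S_def)
  then have iN: "i < N" using iS by (auto simp: S_def)
  have "Suc i \<notin> S"
  proof
    assume "Suc i \<in> S"
    then have "Suc i \<le> i" unfolding i_def using finS by (simp add: Max_ge)
    then show False by simp
  qed
  then have "y < d (Suc i)" using iN by (auto simp: S_def)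
  then show ?thesis using iN iS by (auto simp: S_def)
qed

lemma idx_unique:
  assumes "i < N" "i' < N" "d i \<le> y" "y < d (Suc i)" "d i' \<le> y" "y < d (Suc i')"
  shows "i = i'"
proof (rule ccontr)
  assume "i \<noteq> i'"
  then consider "i < i'" | "i' < i" by linarith
  then show False
  proof cases
    case 1
    then have "d (Suc i) \<le> d i'" using assms by (intro d_le) auto
    then show False using assms by linarith
  next
    case 2
    then have "d (Suc i') \<le> d i" using assms by (intro d_le) auto
    then show False using assms by linarith
  qed
qed

lemma b_red: "b x = b (x - real_of_int \<lfloor>x - d 0\<rfloor>)"
  using b_int[of "x - real_of_int \<lfloor>x - d 0\<rfloor>" "\<lfloor>x - d 0\<rfloor>"] by simp

lemma red_range: "d 0 \<le> x - real_of_int \<lfloor>x - d 0\<rfloor>" "x - real_of_int \<lfloor>x - d 0\<rfloor> < d N"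
  using of_int_floor_le[of "x - d 0"] real_of_int_floor_add_one_gt[of "x - d 0"] d_wrap by linarith+

lemma b_vals: "\<exists>i<N. b x = b (d i)"
proof -
  define y where "y = x - real_of_int \<lfloor>x - d 0\<rfloor>"
  obtain i where "i < N" "d i \<le> y" "y < d (Suc i)" using idx red_range unfolding y_def by blast
  then show ?thesis using b_red b_step unfolding y_def by metis
qed

lemma b_const:
  assumes uv: "u \<le> v" "v < u + 1"
    and nob: "\<And>i z. i < N \<Longrightarrow> u < d i + real_of_int z \<Longrightarrow> d i + real_of_int z \<le> v \<Longrightarrow> False"
  shows "b u = b v"
proof -
  define k where "k = \<lfloor>u - d 0\<rfloor>"
  define y where "y = u - real_of_int k"
  define w where "w = v - real_of_int k"
  have y: "d 0 \<le> y" "y < d N" using red_range[of u] by (simp_all add: y_def k_def)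
  obtain i where i: "i < N" "d i \<le> y" "y < d (Suc i)" using idx[OF y] by blast
  have "w < d (Suc i)"
  proof (rule ccontr)
    assume "\<not> w < d (Suc i)"
    then have le: "d (Suc i) \<le> w" by simp
    show False
    proof (cases "Suc i < N")
      case True
      then show False using nob[of "Suc i" k] le i by (simp add: y_def w_def)
    next
      case False
      then have "Suc i = N" using i by simp
      then have "d (Suc i) = d 0 + 1" using d_wrap by simp
      then show False using nob[of 0 "k + 1"] le i N_pos by (simp add: y_def w_def)
    qed
  qed
  moreover have "d i \<le> w" using i uv by (simp add: y_def w_def)
  ultimately have "b w = b (d i)" using b_step i by blast
  moreover have "b y = b (d i)" using b_step i by blast
  moreover have "b u = b y" using b_int[of y k] by (simp add: y_def)
  moreover have "b v = b w" using b_int[of w k] by (simp add: w_def)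
  ultimately show ?thesis by simp
qed


lemma range_card:
  fixes c \<beta> :: "'i \<Rightarrow> real" and I :: "'i set"
  assumes finI: "finite I"
  defines "f \<equiv> (\<lambda>x. \<Sum>l\<in>I. c l * real_of_int (b (x + \<beta> l)))"
  shows "finite (f ` {0..<1}) \<and> card (f ` {0..<1}) \<le> card I * N + 1"
proof -
  define Q where "Q = insert 0 ((\<lambda>(i,l). frac (d i - \<beta> l)) ` ({..<N} \<times> I))"
  have finQ: "finite Q" using finI by (simp add: Q_def)
  have Qpos: "q \<in> Q \<Longrightarrow> 0 \<le> q" for q by (auto simp: Q_def frac_ge_0)
  have sub: "f ` {0..<1} \<subseteq> f ` Q"
  proof
    fix y assume "y \<in> f ` {0..<1}"
    then obtain x where x: "0 \<le> x" "x < 1" "y = f x" by auto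
    define T where "T = {q\<in>Q. q \<le> x}"
    have finT: "finite T" using finQ by (simp add: T_def)
    have "0 \<in> T" using x by (simp add: T_def Q_def)
    define q where "q = Max T"
    have qT: "q \<in> T" unfolding q_def using finT \<open>0 \<in> T\<close> by (intro Max_in) auto
    then have qQ: "q \<in> Q" and qx: "q \<le> x" by (auto simp: T_def)
    have q0: "0 \<le> q" using Qpos[OF qQ] .
    have "b (q + \<beta> l) = b (x + \<beta> l)" if l: "l \<in> I" for l
    proof (rule b_const)
      show "q + \<beta> l \<le> x + \<beta> l" using qx by simp
      show "x + \<beta> l < q + \<beta> l + 1" using x q0 by simp
    next
      fix i z assume i: "i < N" and lt: "q + \<beta> l < d i + real_of_int z" and le: "d i + real_of_int z \<le> x + \<beta> l"
      define w where "w = d i + real_of_int z - \<beta> l"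
      have w: "q < w" "w \<le> x" using lt le by (simp_all add: w_def)
      have "frac (d i - \<beta> l) = w"
        unfolding frac_unique_iff using w q0 x
        by (auto simp: w_def intro!: Ints_minus Ints_of_int[of "-z", simplified])
      then have "w \<in> Q" using i l by (force simp: Q_def)
      then have "w \<in> T" using w by (simp add: T_def)
      then have "w \<le> q" unfolding q_def using finT by simp
      then show False using w by simp
    qed
    then have "f x = f q" unfolding f_def by (intro sum.cong) auto
    then show "y \<in> f ` Q" using x qQ by auto
  qed
  have "card Q \<le> Suc (card ((\<lambda>(i,l). frac (d i - \<beta> l)) ` ({..<N} \<times> I)))"
    unfolding Q_def by (rule card_insert_le_m1) auto
  also have "\<dots> \<le> Suc (card ({..<N} \<times> I))"
    using finI by (intro Suc_le_mono[THEN iffD2] card_image_le) simp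
  also have "\<dots> = card I * N + 1" by (simp add: card_cartesian_product)
  finally have cQ: "card Q \<le> card I * N + 1" .
  have "card (f ` {0..<1}) \<le> card (f ` Q)"
    using sub finQ by (intro card_mono) auto
  also have "\<dots> \<le> card Q" using finQ by (rule card_image_le)
  finally show ?thesis using cQ sub finQ by (meson finite_imageI finite_subset order.trans)
qed

lemma b_bound: "\<bar>real_of_int (b x)\<bar> \<le> (\<Sum>i<N. \<bar>real_of_int (b (d i))\<bar>)"
proof -
  obtain i where "i < N" "b x = b (d i)" using b_vals by blast
  then show ?thesis by (auto intro: member_le_sum)
qed

lemma b_measurable: "(\<lambda>x. real_of_int (b x)) \<in> borel_measurable borel"
proof -
  define g where "g y = (\<Sum>i<N. real_of_int (b (d i)) * indicator {d i..<d (Suc i)} y)" for y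
  have g: "g \<in> borel_measurable borel" unfolding g_def by measurable
  have eq: "real_of_int (b x) = g (x - real_of_int \<lfloor>x - d 0\<rfloor>)" for x
  proof -
    define y where "y = x - real_of_int \<lfloor>x - d 0\<rfloor>"
    obtain i where i: "i < N" "d i \<le> y" "y < d (Suc i)" using idx red_range unfolding y_def by blast
    have "g y = (\<Sum>j\<in>{i}. real_of_int (b (d j)) * indicator {d j..<d (Suc j)} y)"
      unfolding g_def using i
      by (intro sum.mono_neutral_right) (auto simp: indicator_def dest: idx_unique[OF i(1)])
    also have "\<dots> = real_of_int (b (d i))" using i by (simp add: indicator_def)
    also have "\<dots> = real_of_int (b x)" using b_red b_step i unfolding y_def by metis
    finally show ?thesis by (simp add: y_def)
  qed
  have "(\<lambda>x. g (x - real_of_int \<lfloor>x - d 0\<rfloor>)) \<in> borel_measurable borel"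
    using g by measurable
  then show ?thesis by (simp add: eq)
qed

end

definition ee :: "real \<Rightarrow> complex" where
  "ee w = exp (2 * \<i> * complex_of_real (pi * w))"

lemma ee_alt: "ee w = exp (\<i> * complex_of_real (2 * pi * w))"
  unfolding ee_def by (simp add: algebra_simps)

lemma ee_add: "ee (u + v) = ee u * ee v"
  unfolding ee_def by (simp add: algebra_simps exp_add[symmetric])

lemma ee_int: "ee (real_of_int k) = 1"
proof -
  have "ee (real_of_int k) = exp (\<i> * (of_int k * (of_real pi * 2)))"
    unfolding ee_def by (simp add: algebra_simps)
  also have "\<dots> = 1" by (rule exp_2pi_1_int)
  finally show ?thesis .
qed

lemma ee_0 [simp]: "ee 0 = 1" using ee_int[of 0] by simp

lemma norm_ee [simp]: "norm (ee w) = 1"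
  unfolding ee_alt by (rule norm_exp_i_times)

lemma cnj_ee: "cnj (ee w) = ee (- w)"
  unfolding ee_def by (simp add: exp_cnj)

lemma Re_ee: "Re (ee w) = cos (2 * pi * w)"
  unfolding ee_alt by (simp add: Re_exp)

lemma ee_measurable [measurable]:
  assumes [measurable]: "f \<in> borel_measurable M"
  shows "(\<lambda>x. ee (f x)) \<in> borel_measurable M"
  unfolding ee_def by measurable

definition psi :: "nat \<Rightarrow> real \<Rightarrow> complex" where
  "psi L y = (\<Sum>k<L. ee (real k * y))"

lemma psi_sq: "complex_of_real (cmod (psi L y) ^ 2) = (\<Sum>k<L. \<Sum>k'<L. ee ((real k - real k') * y))"
proof -
  have "complex_of_real (cmod (psi L y) ^ 2) = psi L y * cnj (psi L y)"
    by (rule complex_norm_square)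
  also have "\<dots> = (\<Sum>k<L. ee (real k * y)) * (\<Sum>k'<L. ee (- (real k' * y)))"
    by (simp add: psi_def cnj_ee)
  also have "\<dots> = (\<Sum>k<L. \<Sum>k'<L. ee (real k * y) * ee (- (real k' * y)))"
    by (rule sum_product)
  also have "\<dots> = (\<Sum>k<L. \<Sum>k'<L. ee ((real k - real k') * y))"
    by (simp add: ee_add[symmetric] algebra_simps)
  finally show ?thesis .
qed

lemma cos_ge_half: "\<bar>t\<bar> \<le> pi / 3 \<Longrightarrow> cos t \<ge> 1 / 2"
proof -
  assume a: "\<bar>t\<bar> \<le> pi / 3"
  have "cos (pi / 3) \<le> cos \<bar>t\<bar>"
    using a by (intro cos_monotone_0_pi_le) auto
  then show ?thesis by (simp add: cos_60 cos_abs_real)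
qed

lemma psi_lower:
  assumes L: "L \<ge> 1" and y: "\<bar>y\<bar> \<le> 1 / (6 * real L)"
  shows "cmod (psi L y) \<ge> real L / 2"
proof -
  have "Re (psi L y) = (\<Sum>k<L. cos (2 * pi * (real k * y)))"
    by (simp add: psi_def Re_ee)
  also have "\<dots> \<ge> (\<Sum>k<L. 1 / 2)"
  proof (intro sum_mono cos_ge_half)
    fix k assume k: "k \<in> {..<L}"
    have "\<bar>2 * pi * (real k * y)\<bar> = 2 * pi * (real k * \<bar>y\<bar>)" by (simp add: abs_mult)
    also have "\<dots> \<le> 2 * pi * (real L * (1 / (6 * real L)))"
      using k y by (intro mult_left_mono mult_mono) auto
    also have "\<dots> = pi / 3" using L by (simp add: field_simps)
    finally show "\<bar>2 * pi * (real k * y)\<bar> \<le> pi / 3" .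
  qed
  finally have "Re (psi L y) \<ge> real L / 2" by simp
  then show ?thesis using complex_Re_le_cmod[of "psi L y"] by linarith
qed

lemma fejer_contra:
  fixes M :: "'a measure" and F :: "'a \<Rightarrow> real" and A :: "real set" and L :: nat
  assumes fm: "finite_measure M" and m1: "measure M (space M) = 1"
    and Fm [measurable]: "F \<in> borel_measurable M" and finA: "finite A" and L1: "L \<ge> 1"
    and near: "\<And>x. x \<in> space M \<Longrightarrow> \<exists>a\<in>A. \<bar>F x - a\<bar> \<le> 1 / (6 * real L)"
    and small: "\<And>m::int. m \<noteq> 0 \<Longrightarrow> \<bar>m\<bar> < int L \<Longrightarrow> cmod (integral\<^sup>L M (\<lambda>x. ee (real_of_int m * F x))) \<le> 1 / real L"
  shows "real L \<le> 8 * real (card A)"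
proof -
  interpret finite_measure M by (rule fm)
  define G where "G x = (\<Sum>a\<in>A. cmod (psi L (F x - a)) ^ 2)" for x
  have psim [measurable]: "(\<lambda>x. psi L (F x - a)) \<in> borel_measurable M" for a
    unfolding psi_def by measurable
  have Gm [measurable]: "G \<in> borel_measurable M" unfolding G_def by measurable
  have normpsi: "cmod (psi L y) \<le> real L" for y
    unfolding psi_def by (rule order.trans[OF norm_sum]) simp
  have Gb: "norm (G x) \<le> real (card A) * real L ^ 2" for x
  proof -
    have "G x \<le> (\<Sum>a\<in>A. real L ^ 2)" unfolding G_def
      by (intro sum_mono power_mono normpsi) auto
    moreover have "G x \<ge> 0" unfolding G_def by (intro sum_nonneg) auto
    ultimately show ?thesis by simp
  qed
  have Gint: "integrable M G"
    by (rule integrable_const_bound[where B="real (card A) * real L ^ 2"], rule AE_I2, rule Gb) simp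
  have lower: "real L ^ 2 / 4 \<le> G x" if x: "x \<in> space M" for x
  proof -
    obtain a where a: "a \<in> A" "\<bar>F x - a\<bar> \<le> 1 / (6 * real L)" using near[OF x] by blast
    have "real L / 2 \<le> cmod (psi L (F x - a))" by (rule psi_lower[OF L1 a(2)])
    then have "(real L / 2) ^ 2 \<le> cmod (psi L (F x - a)) ^ 2" by (intro power_mono) auto
    also have "\<dots> \<le> G x" unfolding G_def using a finA by (intro member_le_sum) auto
    finally show ?thesis by (simp add: power_divide)
  qed
  have intlow: "real L ^ 2 / 4 \<le> integral\<^sup>L M G"
  proof -
    have "integral\<^sup>L M (\<lambda>x. real L ^ 2 / 4) \<le> integral\<^sup>L M G"
      by (intro integral_mono Gint lower) auto
    then show ?thesis using m1 by simp
  qed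
  define I where "I m = integral\<^sup>L M (\<lambda>x. ee (real_of_int m * F x))" for m :: int
  have eem [measurable]: "(\<lambda>x. ee (c * (F x - a))) \<in> borel_measurable M" for c a by measurable
  have eeint: "integrable M (\<lambda>x. ee (c * (F x - a)))" for c a
    by (rule integrable_const_bound[where B=1]) auto
  have "complex_of_real (integral\<^sup>L M G) = integral\<^sup>L M (\<lambda>x. complex_of_real (G x))"
    by simp
  also have "\<dots> = integral\<^sup>L M (\<lambda>x. \<Sum>a\<in>A. \<Sum>k<L. \<Sum>k'<L. ee ((real k - real k') * (F x - a)))"
    unfolding G_def of_real_sum psi_sq by simp
  also have "\<dots> = (\<Sum>a\<in>A. \<Sum>k<L. \<Sum>k'<L. integral\<^sup>L M (\<lambda>x. ee ((real k - real k') * (F x - a))))"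
    by (simp add: integral_sum eeint integrable_sum)
  also have "\<dots> = (\<Sum>a\<in>A. \<Sum>k<L. \<Sum>k'<L. ee (- ((real k - real k') * a)) * I (int k - int k'))"
  proof (intro sum.cong refl)
    fix a k k'
    have "integral\<^sup>L M (\<lambda>x. ee ((real k - real k') * (F x - a)))
        = integral\<^sup>L M (\<lambda>x. ee (- ((real k - real k') * a)) * ee (real_of_int (int k - int k') * F x))"
      by (intro Bochner_Integration.integral_cong refl) (simp add: ee_add[symmetric] algebra_simps)
    also have "\<dots> = ee (- ((real k - real k') * a)) * I (int k - int k')"
      by (simp add: I_def)
    finally show "integral\<^sup>L M (\<lambda>x. ee ((real k - real k') * (F x - a))) = ee (- ((real k - real k') * a)) * I (int k - int k')" .
  qed
  finally have eq: "complex_of_real (integral\<^sup>L M G) = (\<Sum>a\<in>A. \<Sum>k<L. \<Sum>k'<L. ee (- ((real k - real k') * a)) * I (int k - int k'))" .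
  have termb: "cmod (I (int k - int k')) \<le> of_bool (k = k') + 1 / real L" if "k < L" "k' < L" for k k'
  proof (cases "k = k'")
    case True
    then show ?thesis using m1 by (simp add: I_def)
  next
    case False
    have "cmod (I (int k - int k')) \<le> 1 / real L"
      unfolding I_def using False that by (intro small) auto
    then show ?thesis using False by simp
  qed
  have "integral\<^sup>L M G = cmod (complex_of_real (integral\<^sup>L M G))"
    using Gint intlow by (simp add: abs_of_nonneg order.trans[OF _ intlow])
  also have "\<dots> \<le> (\<Sum>a\<in>A. \<Sum>k<L. \<Sum>k'<L. cmod (ee (- ((real k - real k') * a)) * I (int k - int k')))"
    unfolding eq by (intro order.trans[OF norm_sum] sum_mono) (simp add: norm_sum order.trans[OF norm_sum] sum_mono)
  also have "\<dots> \<le> (\<Sum>a\<in>A. \<Sum>k<L. \<Sum>k'<L. (of_bool (k = k') + 1 / real L))"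
    by (intro sum_mono) (simp add: norm_mult termb)
  also have "\<dots> = real (card A) * (2 * real L)"
  proof -
    have "(\<Sum>k<L. \<Sum>k'<L. (of_bool (k = k') + 1 / real L)) = (\<Sum>k<L. (1::real) + real L * (1 / real L))"
      by (intro sum.cong refl) (simp add: sum.distrib)
    also have "\<dots> = 2 * real L" using L1 by simp
    finally show ?thesis by simp
  qed
  finally have "real L ^ 2 / 4 \<le> real (card A) * (2 * real L)" using intlow by linarith
  then have "real L * real L \<le> real L * (8 * real (card A))" by (simp add: power2_eq_square algebra_simps)
  then show ?thesis using L1 by (simp add: mult_le_cancel_left)
qed

lemma leb_T_space: "space leb_T = {0..<1}"
  by (simp add: leb_T_def space_restrict_space)

lemma leb_T_emeasure: "emeasure leb_T {0..<1} = 1"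
  unfolding leb_T_def by (subst emeasure_restrict_space) auto

lemma leb_T_finite: "finite_measure leb_T"
  by (rule finite_measureI) (simp add: leb_T_space leb_T_emeasure)

lemma leb_T_measure: "measure leb_T (space leb_T) = 1"
  by (simp add: measure_def leb_T_space leb_T_emeasure)

lemma meas_T: "f \<in> borel_measurable borel \<Longrightarrow> f \<in> borel_measurable leb_T"
  unfolding leb_T_def by (rule measurable_restrict_space1) (simp add: measurable_lborel2)

lemma pow_at_top:
  fixes \<theta> c :: real
  assumes "\<theta> > 1" "c > 0"
  shows "filterlim (\<lambda>n. c * \<theta> ^ n) at_top sequentially"
proof (rule filterlim_at_top_mono)
  show "filterlim (\<lambda>n. (c * (\<theta> - 1)) * real n) at_top sequentially"
    using assms by (intro filterlim_tendsto_pos_mult_at_top[OF tendsto_const] filterlim_real_sequentially) auto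
  show "\<forall>\<^sub>F n in sequentially. c * (\<theta> - 1) * real n \<le> c * \<theta> ^ n"
  proof (intro always_eventually allI)
    fix n
    have "1 + real n * (\<theta> - 1) \<le> (1 + (\<theta> - 1)) ^ n"
      using assms by (intro Bernoulli_inequality) auto
    then have "real n * (\<theta> - 1) \<le> \<theta> ^ n" by simp
    then show "c * (\<theta> - 1) * real n \<le> c * \<theta> ^ n"
      using assms by (simp add: mult.assoc mult.commute[of "\<theta> - 1"] mult_left_mono)
  qed
qed

lemma core:
  fixes lam \<alpha> D r Bb :: real and br X :: "real \<Rightarrow> real" and \<mu> N :: nat and a :: "nat \<Rightarrow> int"
  assumes lam: "0 < lam" "lam < 1"
    and approx: "\<And>j. j \<ge> 1 \<Longrightarrow> \<bar>real \<mu> * (1/lam)^j - real_of_int (a j)\<bar> \<le> D * r^j"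
    and mu: "\<mu> \<ge> 1" and r: "0 < r" "r < 1" and D: "D \<ge> 0"
    and Bb: "\<And>x. \<bar>br x\<bar> \<le> Bb"
    and brm [measurable]: "br \<in> borel_measurable borel"
    and brZ: "\<And>x. br x \<in> \<int>"
    and rng: "\<And>(I::nat set) c \<beta>. finite I \<Longrightarrow>
       finite ((\<lambda>x. \<Sum>l\<in>I. c l * br (x + \<beta> l)) ` {0..<1}) \<and>
       card ((\<lambda>x. \<Sum>l\<in>I. c l * br (x + \<beta> l)) ` {0..<1}) \<le> card I * N + 1"
    and Xdef: "\<And>x. X x = (\<Sum>k. lam ^ k * br (x + real k * \<alpha>))"
  shows "\<not> rajchman (distr leb_T borel X)"
proof
  assume raj: "rajchman (distr leb_T borel X)"
  define \<theta> where "\<theta> = 1 / lam"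
  have th1: "\<theta> > 1" using lam by (simp add: \<theta>_def)
  have lamth: "lam * \<theta> = 1" using lam by (simp add: \<theta>_def)
  have Bb0: "Bb \<ge> 0" using Bb[of 0] by linarith
  have geo: "summable (\<lambda>k. Bb * lam ^ k)" using lam by (intro summable_mult summable_geometric) auto
  have termb: "norm (lam ^ k * br (y + real k * \<alpha>)) \<le> Bb * lam ^ k" for k y
    using Bb[of "y + real k * \<alpha>"] lam by (simp add: abs_mult mult.commute mult_left_mono)
  have summ: "summable (\<lambda>k. lam ^ k * br (y + real k * \<alpha>))" for y
    by (rule summable_comparison_test'[OF geo termb])
  have Xsplit: "X y = (\<Sum>k<n. lam ^ k * br (y + real k * \<alpha>)) + lam ^ n * X (y + real n * \<alpha>)" for y n
  proof -
    have "X y = (\<Sum>i. lam ^ (i + n) * br (y + real (i + n) * \<alpha>)) + (\<Sum>k<n. lam ^ k * br (y + real k * \<alpha>))"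
      unfolding Xdef by (rule suminf_split_initial_segment[OF summ])
    also have "(\<Sum>i. lam ^ (i + n) * br (y + real (i + n) * \<alpha>)) = (\<Sum>i. lam ^ n * (lam ^ i * br ((y + real n * \<alpha>) + real i * \<alpha>)))"
      by (simp add: power_add algebra_simps)
    also have "\<dots> = lam ^ n * X (y + real n * \<alpha>)"
      unfolding Xdef by (rule suminf_mult[OF summ])
    finally show ?thesis by simp
  qed
  have Xbound: "\<bar>X y\<bar> \<le> Bb / (1 - lam)" for y
  proof -
    have "norm (X y) \<le> (\<Sum>k. Bb * lam ^ k)"
      unfolding Xdef by (rule norm_suminf_le[OF termb geo])
    also have "\<dots> = Bb / (1 - lam)" using lam by (simp add: suminf_mult suminf_geometric)
    finally show ?thesis by simp
  qed
  have Xeq: "X = (\<lambda>x. \<Sum>k. lam ^ k * br (x + real k * \<alpha>))" by (rule ext) (rule Xdef)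
  have Xm [measurable]: "X \<in> borel_measurable borel" unfolding Xeq by measurable
  interpret finite_measure leb_T by (rule leb_T_finite)
  have FT: "fourier_transform (distr leb_T borel X) t = integral\<^sup>L leb_T (\<lambda>x. ee (t * X x))" for t
  proof -
    have XmT: "X \<in> measurable leb_T borel" by (rule meas_T[OF Xm])
    have "fourier_transform (distr leb_T borel X) t = integral\<^sup>L leb_T (\<lambda>x. exp (2 * \<i> * complex_of_real (pi * t * X x)))"
      unfolding fourier_transform_def by (rule integral_distr[OF XmT]) measurable
    then show ?thesis by (simp add: ee_def mult.assoc)
  qed
  define J where "J n m = integral\<^sup>L leb_T (\<lambda>x. ee (real_of_int m * real \<mu> * \<theta> ^ n * X x))" for n and m :: int
  have FTlim: "(\<lambda>n. fourier_transform (distr leb_T borel X) (c * \<theta> ^ n)) \<longlonglongrightarrow> 0" if "c > 0" for c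
    using filterlim_compose[OF raj[unfolded rajchman_def] pow_at_top[OF th1 that]] by simp
  have Jlim: "(\<lambda>n. J n m) \<longlonglongrightarrow> 0" if m0: "m \<noteq> 0" for m
  proof (cases "m > 0")
    case True
    have "J n m = fourier_transform (distr leb_T borel X) ((real_of_int m * real \<mu>) * \<theta> ^ n)" for n
      unfolding J_def FT by (simp add: mult.assoc)
    then show ?thesis using FTlim[of "real_of_int m * real \<mu>"] True mu by simp
  next
    case False
    then have mneg: "- m > 0" using m0 by simp
    have "J n m = cnj (fourier_transform (distr leb_T borel X) ((real_of_int (- m) * real \<mu>) * \<theta> ^ n))" for n
    proof -
      have "cnj (fourier_transform (distr leb_T borel X) ((real_of_int (- m) * real \<mu>) * \<theta> ^ n))
          = cnj (integral\<^sup>L leb_T (\<lambda>x. ee ((real_of_int (- m) * real \<mu>) * \<theta> ^ n * X x)))" by (simp only: FT)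
      also have "\<dots> = integral\<^sup>L leb_T (\<lambda>x. cnj (ee ((real_of_int (- m) * real \<mu>) * \<theta> ^ n * X x)))"
        by (rule Bochner_Integration.integral_cnj[symmetric])
      also have "\<dots> = J n m" unfolding J_def cnj_ee by simp
      finally show ?thesis by simp
    qed
    moreover have "real_of_int (- m) * real \<mu> > 0" using mneg mu by (intro mult_pos_pos) auto
    ultimately show ?thesis using tendsto_cnj[OF FTlim[of "real_of_int (- m) * real \<mu>"]] by simp
  qed
  define \<rho> where "\<rho> = max r lam"
  have rho: "0 < \<rho>" "\<rho> < 1" using r lam by (auto simp: \<rho>_def)
  define C where "C = Bb * D / (1 - r) + real \<mu> * Bb / (1 - lam)"
  have C0: "C \<ge> 0" using Bb0 D r lam by (simp add: C_def)
  have "(\<lambda>K. 6 * C * (16 * real N * (of_nat K * \<rho> ^ K) + 9 * \<rho> ^ K)) \<longlonglongrightarrow> 6 * C * (16 * real N * 0 + 9 * 0)"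
    using rho by (intro tendsto_intros powser_times_n_limit_0 LIMSEQ_power_zero) auto
  then have "eventually (\<lambda>K. 6 * C * (16 * real N * (of_nat K * \<rho> ^ K) + 9 * \<rho> ^ K) < 1) sequentially"
    by (intro order_tendstoD(2)) auto
  then obtain K where K: "6 * C * (16 * real N * (real K * \<rho> ^ K) + 9 * \<rho> ^ K) < 1"
    using eventually_sequentially by auto
  define L where "L = 16 * K * N + 9"
  have L1: "L \<ge> 1" by (simp add: L_def)
  have epsL: "C * \<rho> ^ K \<le> 1 / (6 * real L)"
  proof -
    have "6 * real L * (C * \<rho> ^ K) = 6 * C * (16 * real N * (real K * \<rho> ^ K) + 9 * \<rho> ^ K)"
      by (simp add: L_def algebra_simps)
    then have "6 * real L * (C * \<rho> ^ K) \<le> 1" using K by linarith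
    then show ?thesis using L1 by (simp add: field_simps)
  qed
  define Ms where "Ms = {m::int. m \<noteq> 0 \<and> \<bar>m\<bar> < int L}"
  have finMs: "finite Ms"
    by (rule finite_subset[of _ "{- int L..int L}"]) (auto simp: Ms_def)
  have ev: "eventually (\<lambda>n. \<forall>m\<in>Ms. cmod (J n m) < 1 / real L) sequentially"
  proof (rule eventually_ball_finite[OF finMs], rule ballI)
    fix m assume "m \<in> Ms"
    then have "(\<lambda>n. J n m) \<longlonglongrightarrow> 0" using Jlim by (simp add: Ms_def)
    then have "(\<lambda>n. cmod (J n m)) \<longlonglongrightarrow> 0" using tendsto_norm_zero by blast
    then show "eventually (\<lambda>n. cmod (J n m) < 1 / real L) sequentially"
      using L1 by (intro order_tendstoD(2)) auto
  qed
  obtain N0 where N0: "\<And>n. n \<ge> N0 \<Longrightarrow> (\<forall>m\<in>Ms. cmod (J n m) < 1 / real L) \<and> n \<ge> K"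
    using eventually_conj[OF ev eventually_ge_at_top[of K]] unfolding eventually_sequentially by blast
  define n where "n = N0"
  have n: "n \<ge> K" and nJ: "\<And>m. m \<in> Ms \<Longrightarrow> cmod (J n m) < 1 / real L"
    using N0[of N0] by (auto simp: n_def)
  define e where "e j = real \<mu> * \<theta> ^ j - real_of_int (a j)" for j
  have eb: "\<bar>e j\<bar> \<le> D * r ^ j" if "j \<ge> 1" for j using approx[OF that] by (simp add: e_def \<theta>_def)
  define F where "F x = (\<Sum>k<n. e (n - k) * br (x + real k * \<alpha>)) + real \<mu> * X (x + real n * \<alpha>)" for x
  define c where "c k = (if k < n then e (n - k) else real \<mu> * lam ^ (k - n))" for k
  define S where "S = (\<lambda>x. \<Sum>l\<in>{n-K..<n+K}. c l * br (x + real l * \<alpha>))"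
  have ee_rel: "ee (real_of_int m * real \<mu> * \<theta> ^ n * X x) = ee (real_of_int m * F x)" for m x
  proof -
    have pw: "\<theta> ^ n * lam ^ k = \<theta> ^ (n - k)" if "k < n" for k
    proof -
      have "\<theta> ^ n = \<theta> ^ (n - k) * \<theta> ^ k" using that by (simp add: power_add[symmetric])
      moreover have "\<theta> ^ k * lam ^ k = 1" using lamth by (simp add: power_mult_distrib[symmetric] mult.commute)
      ultimately show ?thesis by (simp add: mult.assoc)
    qed
    have pn: "\<theta> ^ n * lam ^ n = 1" using lamth by (simp add: power_mult_distrib[symmetric] mult.commute)
    have "\<theta> ^ n * X x = \<theta> ^ n * (\<Sum>k<n. lam ^ k * br (x + real k * \<alpha>)) + (\<theta> ^ n * lam ^ n) * X (x + real n * \<alpha>)"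
      by (subst Xsplit[of x n]) (simp add: algebra_simps)
    also have "\<theta> ^ n * (\<Sum>k<n. lam ^ k * br (x + real k * \<alpha>)) = (\<Sum>k<n. \<theta> ^ (n - k) * br (x + real k * \<alpha>))"
      by (simp add: sum_distrib_left pw mult.assoc[symmetric])
    finally have thX: "\<theta> ^ n * X x = (\<Sum>k<n. \<theta> ^ (n - k) * br (x + real k * \<alpha>)) + X (x + real n * \<alpha>)"
      using pn by simp
    define Z where "Z = (\<Sum>k<n. real_of_int (a (n - k)) * br (x + real k * \<alpha>))"
    have "Z \<in> \<int>" unfolding Z_def using brZ by (intro Ints_sum Ints_mult) auto
    then obtain z where z: "Z = real_of_int z" by (auto elim: Ints_cases)
    have "real \<mu> * \<theta> ^ n * X x = (\<Sum>k<n. (e (n - k) + real_of_int (a (n - k))) * br (x + real k * \<alpha>)) + real \<mu> * X (x + real n * \<alpha>)"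
      by (simp add: mult.assoc thX distrib_left sum_distrib_left e_def)
    also have "\<dots> = F x + Z"
      by (simp add: F_def Z_def distrib_right sum.distrib)
    finally have "real_of_int m * real \<mu> * \<theta> ^ n * X x = real_of_int m * F x + real_of_int (m * z)"
      by (simp add: z mult.assoc distrib_left)
    then show ?thesis using ee_int[of "m * z", unfolded of_int_mult] by (simp add: ee_add)
  qed
  have F_S: "\<bar>F x - S x\<bar> \<le> C * \<rho> ^ K" for x
  proof -
    define bk where "bk k = br (x + real k * \<alpha>)" for k
    have S_split: "S x = (\<Sum>k\<in>{n-K..<n}. e (n - k) * bk k) + real \<mu> * (\<Sum>j<K. lam ^ j * br ((x + real n * \<alpha>) + real j * \<alpha>))"
    proof -
      have "S x = (\<Sum>k\<in>{n-K..<n}. c k * bk k) + (\<Sum>k\<in>{n..<n+K}. c k * bk k)"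
        unfolding S_def bk_def using n by (subst sum.atLeastLessThan_concat[symmetric]) auto
      also have "(\<Sum>k\<in>{n-K..<n}. c k * bk k) = (\<Sum>k\<in>{n-K..<n}. e (n - k) * bk k)"
        by (intro sum.cong) (auto simp: c_def)
      also have "(\<Sum>k\<in>{n..<n+K}. c k * bk k) = (\<Sum>j\<in>{0..<K}. c (j + n) * bk (j + n))"
        using sum.shift_bounds_nat_ivl[of "\<lambda>k. c k * bk k" 0 n K] by (simp add: add.commute)
      also have "\<dots> = real \<mu> * (\<Sum>j<K. lam ^ j * br ((x + real n * \<alpha>) + real j * \<alpha>))"
        by (simp add: c_def bk_def sum_distrib_left atLeast0LessThan algebra_simps)
      finally show ?thesis .
    qed
    have F_split: "F x = (\<Sum>k<n-K. e (n - k) * bk k) + (\<Sum>k\<in>{n-K..<n}. e (n - k) * bk k)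
        + real \<mu> * ((\<Sum>j<K. lam ^ j * br ((x + real n * \<alpha>) + real j * \<alpha>)) + lam ^ K * X ((x + real n * \<alpha>) + real K * \<alpha>))"
    proof -
      have "(\<Sum>k<n. e (n - k) * bk k) = (\<Sum>k<n-K. e (n - k) * bk k) + (\<Sum>k\<in>{n-K..<n}. e (n - k) * bk k)"
        unfolding lessThan_atLeast0 by (subst sum.atLeastLessThan_concat) auto
      moreover have "X (x + real n * \<alpha>) = (\<Sum>j<K. lam ^ j * br ((x + real n * \<alpha>) + real j * \<alpha>)) + lam ^ K * X ((x + real n * \<alpha>) + real K * \<alpha>)"
        by (rule Xsplit)
      ultimately show ?thesis unfolding F_def bk_def by simp
    qed
    have diff: "F x - S x = (\<Sum>k<n-K. e (n - k) * bk k) + real \<mu> * lam ^ K * X ((x + real n * \<alpha>) + real K * \<alpha>)"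
      unfolding F_split S_split by (simp add: algebra_simps)
    have b1: "\<bar>\<Sum>k<n-K. e (n - k) * bk k\<bar> \<le> Bb * D * r ^ K / (1 - r)"
    proof -
      define m where "m = n - K"
      have "\<bar>\<Sum>k<n-K. e (n - k) * bk k\<bar> \<le> (\<Sum>k<m. D * r ^ (n - k) * Bb)"
        unfolding m_def
      proof (rule order.trans[OF sum_abs sum_mono])
        fix k assume k: "k \<in> {..<n-K}"
        have "\<bar>e (n - k)\<bar> \<le> D * r ^ (n - k)" using k by (intro eb) auto
        moreover have "\<bar>bk k\<bar> \<le> Bb" by (simp add: bk_def Bb)
        ultimately show "\<bar>e (n - k) * bk k\<bar> \<le> D * r ^ (n - k) * Bb"
          unfolding abs_mult by (intro mult_mono) auto
      qed
      also have "(\<Sum>k<m. D * r ^ (n - k) * Bb) = Bb * D * r ^ K * (\<Sum>k<m. r ^ (m - k))"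
      proof -
        have "r ^ (n - k) = r ^ K * r ^ (m - k)" if "k < m" for k
          using that n by (simp add: m_def power_add[symmetric])
        then show ?thesis by (simp add: sum_distrib_left algebra_simps)
      qed
      also have "(\<Sum>k<m. r ^ (m - k)) = (\<Sum>i<m. r ^ Suc i)"
        using sum.nat_diff_reindex[of "\<lambda>i. r ^ Suc i" m] by (simp add: Suc_diff_Suc)
      also have "\<dots> \<le> 1 / (1 - r)"
      proof -
        have "(\<Sum>i<m. r ^ Suc i) = r * (\<Sum>i<m. r ^ i)" by (simp add: sum_distrib_left)
        also have "\<dots> \<le> 1 * (\<Sum>i<m. r ^ i)" using r by (intro mult_right_mono sum_nonneg) auto
        also have "(\<Sum>i<m. r ^ i) = (1 - r ^ m) / (1 - r)" using r by (simp add: sum_gp_strict)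
        also have "1 * \<dots> \<le> 1 / (1 - r)" using r by (simp add: divide_right_mono)
        finally show ?thesis .
      qed
      finally show ?thesis using Bb0 D r
        by (simp add: divide_simps mult_left_mono split: if_splits) 
    qed
    have b2: "\<bar>real \<mu> * lam ^ K * X ((x + real n * \<alpha>) + real K * \<alpha>)\<bar> \<le> real \<mu> * lam ^ K * (Bb / (1 - lam))"
    proof -
      have "\<bar>real \<mu> * lam ^ K\<bar> = real \<mu> * lam ^ K" using lam by simp
      then show ?thesis using lam unfolding abs_mult[of "real \<mu> * lam ^ K"]
        by (simp only:) (intro mult_left_mono Xbound, simp)
    qed
    have "\<bar>F x - S x\<bar> \<le> Bb * D * r ^ K / (1 - r) + real \<mu> * lam ^ K * (Bb / (1 - lam))"
      unfolding diff using b1 b2 by linarith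
    also have "\<dots> \<le> Bb * D * \<rho> ^ K / (1 - r) + real \<mu> * \<rho> ^ K * (Bb / (1 - lam))"
    proof -
      have "r ^ K \<le> \<rho> ^ K" "lam ^ K \<le> \<rho> ^ K" using r lam by (auto intro!: power_mono simp: \<rho>_def)
      then show ?thesis using Bb0 D r lam
        by (intro add_mono divide_right_mono mult_left_mono mult_right_mono) auto
    qed
    also have "\<dots> = C * \<rho> ^ K" by (simp add: C_def algebra_simps)
    finally show ?thesis .
  qed
  define A where "A = S ` {0..<1}"
  have finA: "finite A" and cardA: "card A \<le> card {n-K..<n+K} * N + 1"
    using rng[of "{n-K..<n+K}" c "\<lambda>l. real l * \<alpha>"] by (simp_all add: A_def S_def)
  have cardI: "card {n-K..<n+K} = 2 * K" using n by simp
  have Fm: "F \<in> borel_measurable borel" unfolding F_def[abs_def] by measurable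
  have "real L \<le> 8 * real (card A)"
  proof (rule fejer_contra[OF leb_T_finite leb_T_measure meas_T[OF Fm] finA L1])
    fix x assume "x \<in> space leb_T"
    then have "S x \<in> A" by (simp add: A_def leb_T_space)
    then show "\<exists>a\<in>A. \<bar>F x - a\<bar> \<le> 1 / (6 * real L)" using F_S[of x] epsL by force
  next
    fix m :: int assume m: "m \<noteq> 0" "\<bar>m\<bar> < int L"
    have "integral\<^sup>L leb_T (\<lambda>x. ee (real_of_int m * F x)) = J n m"
      unfolding J_def by (simp add: ee_rel)
    moreover have "cmod (J n m) < 1 / real L" using m by (intro nJ) (simp add: Ms_def)
    ultimately show "cmod (integral\<^sup>L leb_T (\<lambda>x. ee (real_of_int m * F x))) \<le> 1 / real L" by simp
  qed
  also have "\<dots> \<le> 8 * real (2 * K * N + 1)"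
  proof -
    have "card A \<le> 2 * K * N + 1" using cardA cardI by simp
    then have "real (card A) \<le> real (2 * K * N + 1)" by (simp only: of_nat_le_iff)
    then show ?thesis by simp
  qed
  finally show False by (simp add: L_def)
qed

theorem mainTheorem3:
  fixes \<alpha> lam :: real and b :: "real \<Rightarrow> int" and N :: nat and d :: "nat \<Rightarrow> real"
    and X :: "real \<Rightarrow> real"
  assumes lam_bd: "0 < lam" "lam < 1" and pis: "pisot (1 / lam)"
    and b_periodic: "\<And>x. b (x + 1) = b x"
    and N_pos: "N \<ge> 1"
    and d_mono: "\<And>i j. i < j \<Longrightarrow> j \<le> N \<Longrightarrow> d i < d j"
    and d_wrap: "d N = d 0 + 1"
    and b_step: "\<And>i x. i < N \<Longrightarrow> d i \<le> x \<Longrightarrow> x < d (Suc i) \<Longrightarrow> b x = b (d i)"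
    and X_def: "\<And>x. X x = (\<Sum>k. lam ^ k * of_int (b (x + real k * \<alpha>)))"
  shows "\<not> rajchman (distr leb_T borel X)"
proof -
  interpret stepfun b N d
    using b_periodic N_pos d_mono d_wrap b_step by (rule stepfun.intro)
  obtain \<mu> :: nat and a :: "nat \<Rightarrow> int" and D r :: real where
    mu: "\<mu> \<ge> 1" and r: "0 < r" "r < 1" and D: "D \<ge> 0"
    and approx: "\<And>j. j \<ge> 1 \<Longrightarrow> \<bar>real \<mu> * (1 / lam) ^ j - real_of_int (a j)\<bar> \<le> D * r ^ j"
    by (rule pisot_approx[OF pis], rule that) assumption+
  show ?thesis
  proof (rule core[where br = "\<lambda>x. real_of_int (b x)" and Bb = "\<Sum>i<N. \<bar>real_of_int (b (d i))\<bar>"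
        and N = N and \<alpha> = \<alpha>, OF lam_bd approx mu r D])
    show "\<And>x. \<bar>real_of_int (b x)\<bar> \<le> (\<Sum>i<N. \<bar>real_of_int (b (d i))\<bar>)" by (rule b_bound)
    show "(\<lambda>x. real_of_int (b x)) \<in> borel_measurable borel" by (rule b_measurable)
    show "\<And>x. real_of_int (b x) \<in> \<int>" by simp
    show "\<And>x. X x = (\<Sum>k. lam ^ k * real_of_int (b (x + real k * \<alpha>)))" by (rule X_def)
    fix I :: "nat set" and c \<beta> :: "nat \<Rightarrow> real"
    assume "finite I"
    then show "finite ((\<lambda>x. \<Sum>l\<in>I. c l * real_of_int (b (x + \<beta> l))) ` {0..<1}) \<and>
       card ((\<lambda>x. \<Sum>l\<in>I. c l * real_of_int (b (x + \<beta> l))) ` {0..<1}) \<le> card I * N + 1"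
      by (rule range_card)
  qed auto
qed

end
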